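(* Let $T$ be a finite rooted tree with root $v_0$ and leaves identified with classes $1,\dots,K$; identify each non-root node $v_j$ with the set of classes in its subtree, let $p(j)$ be the parent of $v_j$, $d(j)$ its depth, and $a(y)$ the set of non-root nodes on the path from leaf $y$ to the root (including the leaf). Fix $\alpha>0$ and define, for a probability vector $f=(f_1,\dots,f_K)$ with positive entries and label $y$, the hierarchical cross-entropy $$\mathcal L_{\mathrm{HXE}}(f,y)=-\sum_{j\in a(y)} e^{-\alpha d(j)}\log\Big(\frac{\sum_{k\in v_j} f_k}{\sum_{k\in v_{p(j)}} f_k}\Big).$$ Then $\mathcal L_{\mathrm{HXE}}$ can be written in the form $-\sum_{j\in a(y)} w_j\log\big(\sum_{k\in v_j} f_k\big)$ with weights $w_j>0$ on non-root nodes forming a balanced weighted tree (i.e. $\sum_{j\in a(k)} w_j$ is the same for all classes $k$), and consequently $\mathcal L_{\mathrm{HXE}}$ is a proper scoring rule.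
   Context: Proper scoring rule: a loss $\mathcal L(f,y)$ on probability vectors over $K$ classes is proper if, for every label distribution $\pi$, $\sum_k\pi_k\mathcal L(f,k)$ is minimized over the simplex at $f=\pi$. *)

theory Defs
  imports Complex_Main
begin

text \<open>Classes are 0..<K; leaf k is the leaf node of class k.\<close>

definition rooted_tree :: "'v set \<Rightarrow> 'v \<Rightarrow> ('v \<Rightarrow> 'v) \<Rightarrow> bool" where
  "rooted_tree V r par \<longleftrightarrow> finite V \<and> r \<in> V \<and> par r = r \<and>
     (\<forall>v\<in>V. par v \<in> V) \<and> (\<forall>v\<in>V. \<exists>n. (par ^^ n) v = r)"

definition depth :: "'v \<Rightarrow> ('v \<Rightarrow> 'v) \<Rightarrow> 'v \<Rightarrow> nat" where
  "depth r par v = (LEAST n. (par ^^ n) v = r)"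

definition children :: "'v set \<Rightarrow> 'v \<Rightarrow> ('v \<Rightarrow> 'v) \<Rightarrow> 'v \<Rightarrow> 'v set" where
  "children V r par v = {u \<in> V - {r}. par u = v}"

definition tree_leaves :: "'v set \<Rightarrow> 'v \<Rightarrow> ('v \<Rightarrow> 'v) \<Rightarrow> 'v set" where
  "tree_leaves V r par = {v \<in> V. children V r par v = {}}"

definition node_classes :: "nat \<Rightarrow> ('v \<Rightarrow> 'v) \<Rightarrow> (nat \<Rightarrow> 'v) \<Rightarrow> 'v \<Rightarrow> nat set" where
  "node_classes K par leaf v = {k \<in> {0..<K}. \<exists>n. (par ^^ n) (leaf k) = v}"

definition anc_path :: "'v \<Rightarrow> ('v \<Rightarrow> 'v) \<Rightarrow> (nat \<Rightarrow> 'v) \<Rightarrow> nat \<Rightarrow> 'v set" where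
  "anc_path r par leaf y = {(par ^^ n) (leaf y) | n. n < depth r par (leaf y)}"

definition prob_vec_pos :: "nat \<Rightarrow> (nat \<Rightarrow> real) \<Rightarrow> bool" where
  "prob_vec_pos K f \<longleftrightarrow> (\<forall>k<K. f k > 0) \<and> (\<Sum>k<K. f k) = 1"

definition L_HXE :: "real \<Rightarrow> nat \<Rightarrow> 'v \<Rightarrow> ('v \<Rightarrow> 'v) \<Rightarrow> (nat \<Rightarrow> 'v) \<Rightarrow> (nat \<Rightarrow> real) \<Rightarrow> nat \<Rightarrow> real" where
  "L_HXE \<alpha> K r par leaf f y =
     - (\<Sum>j\<in>anc_path r par leaf y. exp (- \<alpha> * real (depth r par j)) *
          ln ((\<Sum>k\<in>node_classes K par leaf j. f k) / (\<Sum>k\<in>node_classes K par leaf (par j). f k)))"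

text \<open>Proper scoring rule (on the open simplex of probability vectors with positive entries,
  the domain on which the loss is defined).\<close>
definition proper :: "nat \<Rightarrow> ((nat \<Rightarrow> real) \<Rightarrow> nat \<Rightarrow> real) \<Rightarrow> bool" where
  "proper K L \<longleftrightarrow> (\<forall>\<pi> f. prob_vec_pos K \<pi> \<longrightarrow> prob_vec_pos K f \<longrightarrow>
      (\<Sum>k<K. \<pi> k * L \<pi> k) \<le> (\<Sum>k<K. \<pi> k * L f k))"

end

theory Submission
  imports Defs
begin

lemma funpow_app: "(f ^^ a) ((f ^^ b) x) = (f ^^ (a + b)) x"
  by (simp add: funpow_add)

lemma rt_funpow_in:
  assumes "rooted_tree V r par" "x \<in> V" shows "(par ^^ n) x \<in> V"
  using assms by (induction n) (auto simp: rooted_tree_def)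

lemma rt_funpow_root:
  assumes "rooted_tree V r par" shows "(par ^^ n) r = r"
  using assms by (induction n) (auto simp: rooted_tree_def)

lemma rt_reach_mono:
  assumes "rooted_tree V r par" "(par ^^ N) x = r" "N \<le> M" shows "(par ^^ M) x = r"
proof -
  have "M = (M - N) + N" using assms(3) by simp
  then have "(par ^^ M) x = (par ^^ (M - N)) ((par ^^ N) x)" by (metis funpow_add comp_apply)
  then show ?thesis using assms rt_funpow_root by metis
qed

lemma rt_depth_reach:
  assumes "rooted_tree V r par" "x \<in> V" shows "(par ^^ depth r par x) x = r"
proof -
  obtain n where "(par ^^ n) x = r" using assms unfolding rooted_tree_def by blast
  then show ?thesis unfolding depth_def by (rule LeastI)
qed

lemma rt_depth_min:
  assumes "n < depth r par x" shows "(par ^^ n) x \<noteq> r"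
  using assms unfolding depth_def by (rule not_less_Least)

lemma rt_cyc:
  assumes rt: "rooted_tree V r par" and v: "v \<in> V" and p: "0 < p" and per: "(par ^^ p) v = v"
  shows "v = r"
proof -
  have pm: "(par ^^ (p * m)) v = v" for m
  proof (induction m)
    case (Suc m)
    have "(par ^^ (p * Suc m)) v = (par ^^ p) ((par ^^ (p * m)) v)"
      by (simp add: funpow_add)
    then show ?case using Suc per by simp
  qed simp
  obtain N where N: "(par ^^ N) v = r" using rt v unfolding rooted_tree_def by blast
  have "N \<le> p * N" using p by simp
  then have "(par ^^ (p * N)) v = r" using rt_reach_mono[OF rt N] by blast
  then show ?thesis using pm by simp
qed

lemma rt_depth_funpow:
  assumes rt: "rooted_tree V r par" and x: "x \<in> V" and n: "n \<le> depth r par x"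
  shows "depth r par ((par ^^ n) x) = depth r par x - n"
  unfolding depth_def[of r par "(par ^^ n) x"]
proof (rule Least_equality)
  have "(par ^^ (depth r par x - n)) ((par ^^ n) x) = (par ^^ depth r par x) x"
    using n by (simp add: funpow_app)
  then show "(par ^^ (depth r par x - n)) ((par ^^ n) x) = r" using rt_depth_reach[OF rt x] by simp
next
  fix m assume m: "(par ^^ m) ((par ^^ n) x) = r"
  show "depth r par x - n \<le> m"
  proof (rule ccontr)
    assume "\<not> ?thesis"
    then have "m + n < depth r par x" by simp
    moreover have "(par ^^ (m + n)) x = r" using m by (simp add: funpow_add)
    ultimately show False using rt_depth_min[of "m + n" r par x] by blast
  qed
qed

lemma rt_depth_par:
  assumes rt: "rooted_tree V r par" and j: "j \<in> V" "j \<noteq> r"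
  shows "depth r par j = Suc (depth r par (par j))"
proof -
  have "depth r par j \<noteq> 0" using rt_depth_reach[OF rt j(1)] j(2) by (metis funpow_0)
  moreover have "depth r par ((par ^^ 1) j) = depth r par j - 1"
    using calculation rt_depth_funpow[OF rt j(1), of 1] by simp
  ultimately show ?thesis by simp
qed

lemma rt_inj:
  assumes rt: "rooted_tree V r par" and x: "x \<in> V"
  shows "inj_on (\<lambda>n. (par ^^ n) x) {..<depth r par x}"
proof -
  have *: False if nm: "n < m" "m < depth r par x" "(par ^^ n) x = (par ^^ m) x" for n m
  proof -
    have "(par ^^ (m - n)) ((par ^^ n) x) = (par ^^ m) x"
      unfolding funpow_app using nm(1) by simp
    then have "(par ^^ n) x = r"
      using rt_cyc[OF rt rt_funpow_in[OF rt x], of "m - n"] nm by simp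
    then show False using rt_depth_min nm by force
  qed
  show ?thesis unfolding inj_on_def
    by (metis * lessThan_iff linorder_neqE_nat)
qed

lemma leaf_in:
  assumes "bij_betw leaf {0..<K} (tree_leaves V r par)" "k < (K::nat)"
  shows "leaf k \<in> tree_leaves V r par" "leaf k \<in> V" "children V r par (leaf k) = {}"
proof -
  show 1: "leaf k \<in> tree_leaves V r par" by (rule bij_betw_apply[OF assms(1)]) (use assms(2) in auto)
  then show "leaf k \<in> V" "children V r par (leaf k) = {}" by (auto simp: tree_leaves_def)
qed

lemma nc_sub: "node_classes K par leaf j \<subseteq> {0..<K}"
  by (auto simp: node_classes_def)

lemma nc_root:
  assumes rt: "rooted_tree V r par" and lv: "bij_betw leaf {0..<K} (tree_leaves V r par)"
  shows "node_classes K par leaf r = {0..<K}"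
  using leaf_in(2)[OF lv] rt unfolding node_classes_def rooted_tree_def by auto

lemma anc_eq: "anc_path r par leaf y = (\<lambda>n. (par ^^ n) (leaf y)) ` {..<depth r par (leaf y)}"
  by (auto simp: anc_path_def)

lemma anc_iff:
  assumes rt: "rooted_tree V r par" and x: "leaf y \<in> V" and j: "j \<noteq> r"
  shows "j \<in> anc_path r par leaf y \<longleftrightarrow> (\<exists>n. (par ^^ n) (leaf y) = j)"
proof
  assume "\<exists>n. (par ^^ n) (leaf y) = j"
  then obtain n where n: "(par ^^ n) (leaf y) = j" by blast
  have "n < depth r par (leaf y)"
  proof (rule ccontr)
    assume "\<not> ?thesis"
    then have "(par ^^ n) (leaf y) = r" using rt_reach_mono[OF rt rt_depth_reach[OF rt x]] by simp
    then show False using n j by simp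
  qed
  then show "j \<in> anc_path r par leaf y" using n by (auto simp: anc_path_def)
qed (auto simp: anc_path_def)

lemma anc_sub:
  assumes rt: "rooted_tree V r par" and x: "leaf y \<in> V"
  shows "anc_path r par leaf y \<subseteq> V - {r}"
  using rt_funpow_in[OF rt x] rt_depth_min[of _ r par "leaf y"] by (auto simp: anc_path_def)

lemma anc_nc:
  assumes rt: "rooted_tree V r par" and x: "leaf y \<in> V" and j: "j \<in> anc_path r par leaf y" and y: "y < K"
  shows "y \<in> node_classes K par leaf j" "y \<in> node_classes K par leaf (par j)"
proof -
  obtain n where n: "(par ^^ n) (leaf y) = j" using j by (auto simp: anc_path_def)
  then show "y \<in> node_classes K par leaf j" using y by (auto simp: node_classes_def)
  have "(par ^^ Suc n) (leaf y) = par j" using n by simp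
  then have "\<exists>m. (par ^^ m) (leaf y) = par j" by (rule exI)
  then show "y \<in> node_classes K par leaf (par j)" using y unfolding node_classes_def by simp
qed

lemma nc_mono: "node_classes K par leaf j \<subseteq> node_classes K par leaf (par j)"
proof
  fix k assume "k \<in> node_classes K par leaf j"
  then obtain n where "k < K" "(par ^^ n) (leaf k) = j" by (auto simp: node_classes_def)
  then have "(par ^^ Suc n) (leaf k) = par j" by simp
  then have "\<exists>m. (par ^^ m) (leaf k) = par j" by (rule exI)
  then show "k \<in> node_classes K par leaf (par j)" using \<open>k < K\<close> unfolding node_classes_def by simp
qed

lemma ch_union:
  assumes rt: "rooted_tree V r par" and lv: "bij_betw leaf {0..<K} (tree_leaves V r par)"
    and u: "u \<in> V" and ch: "children V r par u \<noteq> {}"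
  shows "node_classes K par leaf u = (\<Union>c\<in>children V r par u. node_classes K par leaf c)"
proof
  show "(\<Union>c\<in>children V r par u. node_classes K par leaf c) \<subseteq> node_classes K par leaf u"
    using nc_mono[of K par leaf] by (auto simp: children_def)
next
  show "node_classes K par leaf u \<subseteq> (\<Union>c\<in>children V r par u. node_classes K par leaf c)"
  proof
    fix k assume k: "k \<in> node_classes K par leaf u"
    then have kK: "k < K" and ex: "\<exists>n. (par ^^ n) (leaf k) = u" by (auto simp: node_classes_def)
    define n0 where "n0 = (LEAST n. (par ^^ n) (leaf k) = u)"
    have n0: "(par ^^ n0) (leaf k) = u" unfolding n0_def using ex by (rule LeastI_ex)
    have n0min: "\<And>m. m < n0 \<Longrightarrow> (par ^^ m) (leaf k) \<noteq> u"
      unfolding n0_def by (rule not_less_Least)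
    have "n0 \<noteq> 0" using n0 leaf_in(3)[OF lv kK] ch by auto
    then obtain m where m: "n0 = Suc m" by (cases n0) auto
    define c where "c = (par ^^ m) (leaf k)"
    have pc: "par c = u" using n0 m c_def by simp
    have cV: "c \<in> V" using rt_funpow_in[OF rt leaf_in(2)[OF lv kK]] c_def by simp
    have "c \<noteq> u" using n0min[of m] m c_def by simp
    then have "c \<noteq> r" using pc rt by (auto simp: rooted_tree_def)
    then have "c \<in> children V r par u" using cV pc by (auto simp: children_def)
    moreover have "k \<in> node_classes K par leaf c" using kK c_def by (auto simp: node_classes_def)
    ultimately show "k \<in> (\<Union>c\<in>children V r par u. node_classes K par leaf c)" by blast
  qed
qed

lemma ch_disj_aux:
  assumes rt: "rooted_tree V r par"
    and c1: "c1 \<in> children V r par u" and c2: "c2 \<in> children V r par u"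
    and a: "(par ^^ a) x = c1" and b: "(par ^^ b) x = c2" and ab: "a < b"
  shows False
proof -
  have c2eq: "c2 = (par ^^ (b - a - 1)) u"
  proof -
    have "(par ^^ (b - a - 1)) u = (par ^^ (b - a - 1)) ((par ^^ 1) c1)" using c1 by (simp add: children_def)
    also have "\<dots> = (par ^^ b) x" unfolding a[symmetric] funpow_app using ab by simp
    finally show ?thesis using b by simp
  qed
  have uV: "u \<in> V" using c1 rt by (auto simp: children_def rooted_tree_def)
  have "(par ^^ (b - a)) u = u"
  proof -
    have e: "1 + (b - a - 1) = b - a" using ab by simp
    have "(par ^^ (b - a)) u = (par ^^ 1) ((par ^^ (b - a - 1)) u)" unfolding funpow_app e ..
    also have "\<dots> = par c2" using c2eq by simp
    finally show ?thesis using c2 by (simp add: children_def)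
  qed
  then have "u = r" using rt_cyc[OF rt uV, of "b - a"] ab by simp
  then have "c2 = r" using c2eq rt_funpow_root[OF rt] by simp
  then show False using c2 by (simp add: children_def)
qed

lemma ch_disj:
  assumes rt: "rooted_tree V r par"
    and c1: "c1 \<in> children V r par u" and c2: "c2 \<in> children V r par u" and ne: "c1 \<noteq> c2"
  shows "node_classes K par leaf c1 \<inter> node_classes K par leaf c2 = {}"
proof (rule ccontr)
  assume "\<not> ?thesis"
  then obtain k where "k \<in> node_classes K par leaf c1" "k \<in> node_classes K par leaf c2"
    by blast
  then obtain a b where a: "(par ^^ a) (leaf k) = c1" and b: "(par ^^ b) (leaf k) = c2"
    unfolding node_classes_def by blast
  consider "a < b" | "a = b" | "b < a" by linarith
  then show False
  proof cases
    case 1 then show ?thesis using ch_disj_aux[OF rt c1 c2 a b] by blast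
  next
    case 2 then show ?thesis using a b ne by simp
  next
    case 3 then show ?thesis using ch_disj_aux[OF rt c2 c1 b a] by blast
  qed
qed

definition Sg :: "nat \<Rightarrow> ('v \<Rightarrow> 'v) \<Rightarrow> (nat \<Rightarrow> 'v) \<Rightarrow> (nat \<Rightarrow> real) \<Rightarrow> 'v \<Rightarrow> real" where
  "Sg K par leaf g j = (\<Sum>k\<in>node_classes K par leaf j. g k)"

lemma ch_sum:
  assumes rt: "rooted_tree V r par" and lv: "bij_betw leaf {0..<K} (tree_leaves V r par)"
    and u: "u \<in> V" and ch: "children V r par u \<noteq> {}"
  shows "(\<Sum>c\<in>children V r par u. Sg K par leaf g c) = Sg K par leaf g u"
proof -
  have fin: "finite (children V r par u)" using rt by (auto simp: rooted_tree_def children_def)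
  have finc: "finite (node_classes K par leaf c)" for c by (rule finite_subset[OF nc_sub]) simp
  have dj: "\<forall>i\<in>children V r par u. \<forall>j\<in>children V r par u. i \<noteq> j \<longrightarrow>
      node_classes K par leaf i \<inter> node_classes K par leaf j = {}"
    by (intro ballI impI) (rule ch_disj[OF rt])
  show ?thesis unfolding Sg_def ch_union[OF rt lv u ch]
    by (rule sum.UNION_disjoint[symmetric, OF fin _ dj]) (simp add: finc)
qed

lemma swap_anc:
  assumes rt: "rooted_tree V r par" and lv: "bij_betw leaf {0..<K} (tree_leaves V r par)"
  shows "(\<Sum>k<K. \<pi> k * (\<Sum>j\<in>anc_path r par leaf k. G j))
       = (\<Sum>j\<in>V - {r}. G j * Sg K par leaf \<pi> j)"
proof -
  have finV: "finite (V - {r})" using rt by (simp add: rooted_tree_def)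
  have A: "anc_path r par leaf k = {j. j \<in> V - {r} \<and> k \<in> node_classes K par leaf j}"
    if k: "k < K" for k
  proof -
    have x: "leaf k \<in> V" using leaf_in(2)[OF lv k] .
    show ?thesis
    proof (intro set_eqI iffI)
      fix j assume j: "j \<in> anc_path r par leaf k"
      then have "j \<in> V - {r}" using anc_sub[where leaf=leaf and y=k, OF rt x] by blast
      moreover have "k \<in> node_classes K par leaf j" using anc_nc(1)[where leaf=leaf and y=k, OF rt x j k] .
      ultimately show "j \<in> {j. j \<in> V - {r} \<and> k \<in> node_classes K par leaf j}" by blast
    next
      fix j assume "j \<in> {j. j \<in> V - {r} \<and> k \<in> node_classes K par leaf j}"
      then have j: "j \<in> V" "j \<noteq> r" "\<exists>n. (par ^^ n) (leaf k) = j"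
        by (auto simp: node_classes_def)
      then show "j \<in> anc_path r par leaf k" using anc_iff[where leaf=leaf and y=k, OF rt x j(2)] by blast
    qed
  qed
  have B: "{k. k \<in> {..<K} \<and> k \<in> node_classes K par leaf j} = node_classes K par leaf j" for j
    using nc_sub[of K par leaf j] by auto
  have "(\<Sum>k<K. \<pi> k * (\<Sum>j\<in>anc_path r par leaf k. G j))
      = (\<Sum>k\<in>{..<K}. \<Sum>j\<in>{j. j \<in> V - {r} \<and> k \<in> node_classes K par leaf j}. \<pi> k * G j)"
    by (rule sum.cong[OF refl]) (simp add: A sum_distrib_left)
  also have "\<dots> = (\<Sum>j\<in>V - {r}. \<Sum>k\<in>{k. k \<in> {..<K} \<and> k \<in> node_classes K par leaf j}. \<pi> k * G j)"
    by (rule sum.swap_restrict[OF finite_lessThan finV])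
  also have "\<dots> = (\<Sum>j\<in>V - {r}. G j * Sg K par leaf \<pi> j)"
    unfolding B by (rule sum.cong[OF refl]) (simp add: Sg_def sum_distrib_left mult.commute)
  finally show ?thesis .
qed

lemma group_par:
  assumes rt: "rooted_tree V r par" and lv: "bij_betw leaf {0..<K} (tree_leaves V r par)"
  shows "(\<Sum>j\<in>V - {r}. h (par j) * Sg K par leaf g j)
       = (\<Sum>u\<in>V. h u * (if children V r par u = {} then 0 else Sg K par leaf g u))"
proof -
  have finV: "finite V" using rt by (simp add: rooted_tree_def)
  have im: "par ` (V - {r}) \<subseteq> V" using rt by (auto simp: rooted_tree_def)
  have "(\<Sum>j\<in>V - {r}. h (par j) * Sg K par leaf g j)
      = (\<Sum>u\<in>V. \<Sum>j\<in>{x. x \<in> V - {r} \<and> par x = u}. h (par j) * Sg K par leaf g j)"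
    by (rule sum.group[symmetric, OF _ finV im]) (use finV in simp)
  also have "\<dots> = (\<Sum>u\<in>V. h u * (if children V r par u = {} then 0 else Sg K par leaf g u))"
  proof (rule sum.cong[OF refl])
    fix u assume u: "u \<in> V"
    have ch: "{x. x \<in> V - {r} \<and> par x = u} = children V r par u" by (auto simp: children_def)
    have "(\<Sum>j\<in>{x. x \<in> V - {r} \<and> par x = u}. h (par j) * Sg K par leaf g j)
        = h u * (\<Sum>j\<in>children V r par u. Sg K par leaf g j)"
      unfolding ch sum_distrib_left by (rule sum.cong[OF refl]) (simp add: children_def)
    also have "\<dots> = h u * (if children V r par u = {} then 0 else Sg K par leaf g u)"
      using ch_sum[OF rt lv u] by simp
    finally show "(\<Sum>j\<in>{x. x \<in> V - {r} \<and> par x = u}. h (par j) * Sg K par leaf g j)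
        = h u * (if children V r par u = {} then 0 else Sg K par leaf g u)" .
  qed
  finally show ?thesis .
qed

lemma tele:
  fixes g l :: "nat \<Rightarrow> real"
  shows "(\<Sum>n<D. g n * (l n - l (Suc n)))
       = (\<Sum>n<D. (g n - (if n = 0 then 0 else g (n - 1))) * l n) - (if D = 0 then 0 else g (D - 1) * l D)"
proof (induction D)
  case (Suc D)
  then show ?case by (cases D) (simp_all add: algebra_simps)
qed simp

lemma tele_w:
  fixes g :: "nat \<Rightarrow> real"
  shows "0 < D \<Longrightarrow> (\<Sum>n<D. g n - (if n = 0 then 0 else g (n - 1))) = g (D - 1)"
proof (induction D)
  case (Suc D)
  then show ?case by (cases D) simp_all
qed simp

lemma Sg_pos:
  assumes "prob_vec_pos K g" "y \<in> node_classes K par leaf j"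
  shows "Sg K par leaf g j > 0"
  unfolding Sg_def
proof (rule sum_pos)
  show "finite (node_classes K par leaf j)" by (rule finite_subset[OF nc_sub]) simp
  show "node_classes K par leaf j \<noteq> {}" using assms(2) by blast
  fix i assume "i \<in> node_classes K par leaf j"
  then have "i < K" using nc_sub by fastforce
  then show "0 < g i" using assms(1) by (simp add: prob_vec_pos_def)
qed

lemma Sg_root:
  assumes rt: "rooted_tree V r par" and lv: "bij_betw leaf {0..<K} (tree_leaves V r par)"
    and g: "prob_vec_pos K g"
  shows "Sg K par leaf g r = 1"
  using g unfolding Sg_def nc_root[OF rt lv] prob_vec_pos_def by (simp add: atLeast0LessThan)

lemma path_node:
  assumes rt: "rooted_tree V r par" and lv: "bij_betw leaf {0..<K} (tree_leaves V r par)"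
    and k: "k < (K::nat)" and n: "n < depth r par (leaf k)"
  shows "depth r par ((par ^^ n) (leaf k)) = depth r par (leaf k) - n"
    and "(par ^^ n) (leaf k) \<in> tree_leaves V r par \<longleftrightarrow> n = 0"
proof -
  have x: "leaf k \<in> V" using leaf_in(2)[OF lv k] .
  show "depth r par ((par ^^ n) (leaf k)) = depth r par (leaf k) - n"
    using rt_depth_funpow[OF rt x] n by simp
  show "(par ^^ n) (leaf k) \<in> tree_leaves V r par \<longleftrightarrow> n = 0"
  proof (cases n)
    case 0 then show ?thesis using leaf_in(1)[OF lv k] by simp
  next
    case (Suc m)
    define c where "c = (par ^^ m) (leaf k)"
    have "c \<in> V" using rt_funpow_in[OF rt x] c_def by simp
    moreover have "c \<noteq> r" using rt_depth_min[of m r par "leaf k"] n Suc c_def by simp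
    moreover have "par c = (par ^^ n) (leaf k)" using Suc c_def by simp
    ultimately have "c \<in> children V r par ((par ^^ n) (leaf k))" by (simp add: children_def)
    then show ?thesis using Suc by (auto simp: tree_leaves_def)
  qed
qed

theorem proposition4:
  fixes V :: "'v set" and r :: 'v and par :: "'v \<Rightarrow> 'v"
    and leaf :: "nat \<Rightarrow> 'v" and K :: nat and \<alpha> :: real
  assumes tree: "rooted_tree V r par"
    and leaves: "bij_betw leaf {0..<K} (tree_leaves V r par)"
    and alpha: "\<alpha> > 0"
  shows "(\<exists>w :: 'v \<Rightarrow> real.
            (\<forall>j\<in>V - {r}. w j > 0)
          \<and> (\<exists>c. \<forall>k<K. (\<Sum>j\<in>anc_path r par leaf k. w j) = c)
          \<and> (\<forall>f y. prob_vec_pos K f \<longrightarrow> y < K \<longrightarrow>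
               L_HXE \<alpha> K r par leaf f y =
                 - (\<Sum>j\<in>anc_path r par leaf y. w j * ln (\<Sum>k\<in>node_classes K par leaf j. f k))))
       \<and> proper K (L_HXE \<alpha> K r par leaf)"
proof
  let ?d = "depth r par"
  define w where "w j = exp (- \<alpha> * real (?d j)) -
     (if j \<in> tree_leaves V r par then 0 else exp (- \<alpha> * (real (?d j) + 1)))" for j
  have expl: "exp (- \<alpha> * (x + 1)) < exp (- \<alpha> * x)" for x :: real
    using alpha by (simp add: algebra_simps)
  have wpath: "w ((par ^^ n) (leaf k)) = exp (- \<alpha> * real (?d (leaf k) - n))
      - (if n = 0 then 0 else exp (- \<alpha> * real (?d (leaf k) - (n - 1))))"
    if k: "k < K" and n: "n < ?d (leaf k)" for k n
  proof -
    have "real (?d (leaf k) - (n - 1)) = real (?d (leaf k) - n) + 1" if "n \<noteq> 0" using n that by simp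
    then show ?thesis unfolding w_def path_node[OF tree leaves k n] by simp
  qed
  have reidx: "(\<Sum>j\<in>anc_path r par leaf k. F j) = (\<Sum>n<?d (leaf k). F ((par ^^ n) (leaf k)))"
    if k: "k < K" for k and F :: "'v \<Rightarrow> real"
    unfolding anc_eq by (rule sum.reindex_cong[OF rt_inj[OF tree leaf_in(2)[OF leaves k]] refl refl])
  show "\<exists>w :: 'v \<Rightarrow> real.
            (\<forall>j\<in>V - {r}. w j > 0)
          \<and> (\<exists>c. \<forall>k<K. (\<Sum>j\<in>anc_path r par leaf k. w j) = c)
          \<and> (\<forall>f y. prob_vec_pos K f \<longrightarrow> y < K \<longrightarrow>
               L_HXE \<alpha> K r par leaf f y =
                 - (\<Sum>j\<in>anc_path r par leaf y. w j * ln (\<Sum>k\<in>node_classes K par leaf j. f k)))"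
  proof (intro exI conjI)
    show "\<forall>j\<in>V - {r}. w j > 0" using expl by (auto simp: w_def)
    show "\<forall>k<K. (\<Sum>j\<in>anc_path r par leaf k. w j) = (if \<exists>k<K. leaf k = r then 0 else exp (- \<alpha>))"
    proof (intro allI impI)
      fix k assume k: "k < K"
      have x: "leaf k \<in> V" using leaf_in(2)[OF leaves k] .
      show "(\<Sum>j\<in>anc_path r par leaf k. w j) = (if \<exists>k<K. leaf k = r then 0 else exp (- \<alpha>))"
      proof (cases "?d (leaf k) = 0")
        case True
        then have "leaf k = r" using rt_depth_reach[OF tree x] by simp
        then show ?thesis using True k unfolding reidx[OF k] by auto
      next
        case False
        define D where "D = ?d (leaf k)"
        have "(\<Sum>j\<in>anc_path r par leaf k. w j) = (\<Sum>n<D. exp (- \<alpha> * real (D - n))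
      - (if n = 0 then 0 else exp (- \<alpha> * real (D - (n - 1)))))"
          unfolding reidx[OF k] D_def by (rule sum.cong[OF refl]) (simp add: wpath[OF k])
        also have "\<dots> = exp (- \<alpha> * real (D - (D - 1)))"
          by (rule tele_w[where g = "\<lambda>n. exp (- \<alpha> * real (D - n))"]) (use False D_def in simp)
        also have "\<dots> = exp (- \<alpha>)" using False D_def by simp
        finally have s: "(\<Sum>j\<in>anc_path r par leaf k. w j) = exp (- \<alpha>)" .
        have "\<not> (\<exists>k'<K. leaf k' = r)"
        proof
          assume "\<exists>k'<K. leaf k' = r"
          then obtain k' where k': "k' < K" "leaf k' = r" by blast
          define c where "c = (par ^^ (D - 1)) (leaf k)"
          have "c \<in> V" using rt_funpow_in[OF tree x] c_def by simp
          moreover have "c \<noteq> r" using rt_depth_min[of "D - 1" r par "leaf k"] False D_def c_def by simp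
          moreover have "par c = r"
          proof -
            have "par c = (par ^^ Suc (D - 1)) (leaf k)" using c_def by simp
            also have "Suc (D - 1) = D" using False D_def by simp
            finally show ?thesis using rt_depth_reach[OF tree x] D_def by simp
          qed
          ultimately have "c \<in> children V r par r" by (simp add: children_def)
          then show False using leaf_in(3)[OF leaves k'(1)] k'(2) by simp
        qed
        then show ?thesis using s by simp
      qed
    qed
    show "\<forall>f y. prob_vec_pos K f \<longrightarrow> y < K \<longrightarrow>
               L_HXE \<alpha> K r par leaf f y =
                 - (\<Sum>j\<in>anc_path r par leaf y. w j * ln (\<Sum>k\<in>node_classes K par leaf j. f k))"
    proof (intro allI impI)
      fix f y assume f: "prob_vec_pos K f" and y: "y < K"
      have x: "leaf y \<in> V" using leaf_in(2)[OF leaves y] .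
      define D where "D = ?d (leaf y)"
      define l where "l n = ln (Sg K par leaf f ((par ^^ n) (leaf y)))" for n
      define g where "g n = exp (- \<alpha> * real (D - n))" for n
      have lD: "l D = 0" unfolding l_def D_def rt_depth_reach[OF tree x] Sg_root[OF tree leaves f] by simp
      have inA: "(par ^^ n) (leaf y) \<in> anc_path r par leaf y" if "n < D" for n
        unfolding anc_eq D_def[symmetric] using that by blast
      have "L_HXE \<alpha> K r par leaf f y = - (\<Sum>n<D. g n * (l n - l (Suc n)))"
        unfolding L_HXE_def reidx[OF y] D_def[symmetric]
      proof (intro arg_cong[where f = uminus] sum.cong[OF refl])
        fix n assume "n \<in> {..<D}"
        then have n: "n < D" by simp
        have p1: "Sg K par leaf f ((par ^^ n) (leaf y)) > 0"
          by (rule Sg_pos[OF f anc_nc(1)[where leaf=leaf and y=y, OF tree x inA[OF n] y]])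
        have p2: "Sg K par leaf f (par ((par ^^ n) (leaf y))) > 0"
          by (rule Sg_pos[OF f anc_nc(2)[where leaf=leaf and y=y, OF tree x inA[OF n] y]])
        show "exp (- \<alpha> * real (?d ((par ^^ n) (leaf y)))) *
            ln ((\<Sum>k\<in>node_classes K par leaf ((par ^^ n) (leaf y)). f k) /
                (\<Sum>k\<in>node_classes K par leaf (par ((par ^^ n) (leaf y))). f k))
            = g n * (l n - l (Suc n))"
          using p1 p2 path_node(1)[OF tree leaves y n[unfolded D_def]]
          by (simp add: g_def l_def D_def Sg_def ln_div)
      qed
      also have "\<dots> = - (\<Sum>n<D. (g n - (if n = 0 then 0 else g (n - 1))) * l n)"
        unfolding tele lD by simp
      also have "\<dots> = - (\<Sum>j\<in>anc_path r par leaf y. w j * ln (\<Sum>k\<in>node_classes K par leaf j. f k))"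
        unfolding reidx[OF y] D_def[symmetric]
        by (intro arg_cong[where f = uminus] sum.cong[OF refl])
           (simp add: wpath[OF y, unfolded D_def[symmetric]] g_def l_def Sg_def)
      finally show "L_HXE \<alpha> K r par leaf f y =
                 - (\<Sum>j\<in>anc_path r par leaf y. w j * ln (\<Sum>k\<in>node_classes K par leaf j. f k))" .
    qed
  qed
next
  let ?d = "depth r par"
  let ?S = "Sg K par leaf"
  let ?A = "anc_path r par leaf"
  show "proper K (L_HXE \<alpha> K r par leaf)"
    unfolding proper_def
  proof (intro allI impI)
    fix \<pi> f assume pi: "prob_vec_pos K \<pi>" and f: "prob_vec_pos K f"
    define c where "c j = exp (- \<alpha> * real (?d j))" for j
    define q where "q g j = ?S g j / ?S g (par j)" for g j
    define G where "G j = c j * (1 - q f j / q \<pi> j)" for j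
    have L: "L_HXE \<alpha> K r par leaf g k = - (\<Sum>j\<in>?A k. c j * ln (q g j))" for g k
      by (simp add: L_HXE_def c_def q_def Sg_def)
    have eq: "(\<Sum>k<K. \<pi> k * L_HXE \<alpha> K r par leaf f k) - (\<Sum>k<K. \<pi> k * L_HXE \<alpha> K r par leaf \<pi> k)
        = (\<Sum>k<K. \<pi> k * (\<Sum>j\<in>?A k. c j * (ln (q \<pi> j) - ln (q f j))))"
      unfolding L sum_subtractf[symmetric]
      by (rule sum.cong[OF refl]) (simp add: algebra_simps sum_subtractf sum_distrib_left)
    have le: "(\<Sum>k<K. \<pi> k * (\<Sum>j\<in>?A k. G j)) \<le> (\<Sum>k<K. \<pi> k * (\<Sum>j\<in>?A k. c j * (ln (q \<pi> j) - ln (q f j))))"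
    proof (rule sum_mono)
      fix k assume "k \<in> {..<K}"
      then have k: "k < K" by simp
      have x: "leaf k \<in> V" using leaf_in(2)[OF leaves k] .
      have pk: "\<pi> k \<ge> 0" using pi k by (simp add: prob_vec_pos_def less_imp_le)
      show "\<pi> k * (\<Sum>j\<in>?A k. G j) \<le> \<pi> k * (\<Sum>j\<in>?A k. c j * (ln (q \<pi> j) - ln (q f j)))"
      proof (rule mult_left_mono[OF sum_mono pk])
        fix j assume j: "j \<in> ?A k"
        have n1: "k \<in> node_classes K par leaf j" by (rule anc_nc(1)[where leaf=leaf and y=k, OF tree x j k])
        have n2: "k \<in> node_classes K par leaf (par j)" by (rule anc_nc(2)[where leaf=leaf and y=k, OF tree x j k])
        have qp: "q \<pi> j > 0" "q f j > 0"
          unfolding q_def using Sg_pos[OF pi n1] Sg_pos[OF pi n2] Sg_pos[OF f n1] Sg_pos[OF f n2] by simp_all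
        have "ln (q f j / q \<pi> j) \<le> q f j / q \<pi> j - 1" by (rule ln_le_minus_one) (use qp in simp)
        then have "1 - q f j / q \<pi> j \<le> ln (q \<pi> j) - ln (q f j)" using qp by (simp add: ln_div)
        moreover have "c j > 0" by (simp add: c_def)
        ultimately show "G j \<le> c j * (ln (q \<pi> j) - ln (q f j))" unfolding G_def
          by (simp add: mult_left_mono)
      qed
    qed
    define h where "h u = exp (- \<alpha> * (real (?d u) + 1))" for u
    define h2 where "h2 u = h u * ?S \<pi> u / ?S f u" for u
    have ev: "\<pi>' \<in> {\<pi>, f} \<Longrightarrow> node_classes K par leaf j = {} \<Longrightarrow> ?S \<pi>' j = 0" for \<pi>' j
      by (simp add: Sg_def)
    have "(\<Sum>k<K. \<pi> k * (\<Sum>j\<in>?A k. G j)) = (\<Sum>j\<in>V - {r}. G j * ?S \<pi> j)"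
      by (rule swap_anc[OF tree leaves])
    also have "\<dots> = (\<Sum>j\<in>V - {r}. h (par j) * ?S \<pi> j - h2 (par j) * ?S f j)"
    proof (rule sum.cong[OF refl])
      fix j assume j: "j \<in> V - {r}"
      have dj: "?d j = Suc (?d (par j))" using rt_depth_par[OF tree, of j] j by simp
      have cj: "c j = h (par j)" unfolding c_def h_def dj by (simp add: algebra_simps)
      show "G j * ?S \<pi> j = h (par j) * ?S \<pi> j - h2 (par j) * ?S f j"
      proof (cases "node_classes K par leaf j = {}")
        case True then show ?thesis by (simp add: Sg_def)
      next
        case False
        then obtain y where y1: "y \<in> node_classes K par leaf j" by blast
        have y2: "y \<in> node_classes K par leaf (par j)" using y1 nc_mono[of K par leaf j] by blast
        have pos: "?S \<pi> j > 0" "?S \<pi> (par j) > 0" "?S f j > 0" "?S f (par j) > 0"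
          using Sg_pos[OF pi y1] Sg_pos[OF pi y2] Sg_pos[OF f y1] Sg_pos[OF f y2] by simp_all
        show ?thesis unfolding G_def cj h2_def q_def using pos by (simp add: field_simps)
      qed
    qed
    also have "\<dots> = (\<Sum>j\<in>V - {r}. h (par j) * ?S \<pi> j) - (\<Sum>j\<in>V - {r}. h2 (par j) * ?S f j)"
      by (rule sum_subtractf)
    also have "\<dots> = (\<Sum>u\<in>V. h u * (if children V r par u = {} then 0 else ?S \<pi> u))
        - (\<Sum>u\<in>V. h2 u * (if children V r par u = {} then 0 else ?S f u))"
      unfolding group_par[OF tree leaves] ..
    also have "\<dots> = 0"
    proof -
      have "(\<Sum>u\<in>V. h u * (if children V r par u = {} then 0 else ?S \<pi> u))
        = (\<Sum>u\<in>V. h2 u * (if children V r par u = {} then 0 else ?S f u))"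
      proof (rule sum.cong[OF refl])
        fix u assume "u \<in> V"
        show "h u * (if children V r par u = {} then 0 else ?S \<pi> u)
            = h2 u * (if children V r par u = {} then 0 else ?S f u)"
        proof (cases "node_classes K par leaf u = {}")
          case True then show ?thesis by (simp add: Sg_def)
        next
          case False
          then obtain y where y1: "y \<in> node_classes K par leaf u" by blast
          have "?S f u > 0" using Sg_pos[OF f y1] .
          then show ?thesis unfolding h2_def by simp
        qed
      qed
      then show ?thesis by simp
    qed
    finally have "(\<Sum>k<K. \<pi> k * (\<Sum>j\<in>?A k. G j)) = 0" .
    with le eq show "(\<Sum>k<K. \<pi> k * L_HXE \<alpha> K r par leaf \<pi> k) \<le> (\<Sum>k<K. \<pi> k * L_HXE \<alpha> K r par leaf f k)"
      by linarith
  qed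
qed

end
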